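(* Let $f:[0,\infty)\rightarrow[0,\infty)$ be a continuous function which is $3$-convex, nondecreasing and concave. Then for every $\alpha\in(0,1]$ the function $f^{\alpha}$ (i.e. $x\mapsto f(x)^{\alpha}$) is also continuous, $3$-convex, nondecreasing and concave on $[0,\infty)$.
   Context: A function $f$ defined on an interval $I$ is called $3$-convex if for all $x_0<x_1<x_2<x_3$ in $I$ the third-order divided difference $[x_0,x_1,x_2,x_3;f]=\sum_{j=0}^{3}\frac{f(x_j)}{\prod_{k\neq j}(x_j-x_k)}$ is nonnegative. *)

theory Defs
  imports "HOL-Analysis.Analysis"
begin

definition divdiff3 :: "(real \<Rightarrow> real) \<Rightarrow> real \<Rightarrow> real \<Rightarrow> real \<Rightarrow> real \<Rightarrow> real" where
  "divdiff3 f x0 x1 x2 x3 =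
     (let xs = (\<lambda>j::nat. if j = 0 then x0 else if j = 1 then x1 else if j = 2 then x2 else x3)
      in (\<Sum>j\<in>{0..3}. f (xs j) / (\<Prod>k\<in>{0..3} - {j}. (xs j - xs k))))"

definition three_convex_on :: "real set \<Rightarrow> (real \<Rightarrow> real) \<Rightarrow> bool" where
  "three_convex_on I f \<longleftrightarrow>
     (\<forall>x0 x1 x2 x3. x0 \<in> I \<and> x1 \<in> I \<and> x2 \<in> I \<and> x3 \<in> I \<and> x0 < x1 \<and> x1 < x2 \<and> x2 < x3
        \<longrightarrow> divdiff3 f x0 x1 x2 x3 \<ge> 0)"

end

theory Submission
  imports Defs
begin

lemma divdiff3_explicit:
  "divdiff3 f a b c d = f a / ((a-b)*(a-c)*(a-d)) + f b / ((b-a)*(b-c)*(b-d))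
     + f c / ((c-a)*(c-b)*(c-d)) + f d / ((d-a)*(d-b)*(d-c))"
proof -
  have s: "{0..3::nat} = {0,1,2,3}" by auto
  have p: "{0,Suc 0,2,3::nat} - {0} = {Suc 0,2,3}" "{0,Suc 0,2,3::nat} - {Suc 0} = {0,2,3}"
     "{0,Suc 0,2,3::nat} - {2} = {0,Suc 0,3}" "{0,Suc 0,2,3::nat} - {3} = {0,Suc 0,2}" by auto
  show ?thesis unfolding divdiff3_def Let_def s by (simp add: p mult.assoc)
qed

lemma lagrange_id:
  fixes x0 x1 x2 x3 g0 g1 g2 g3 :: real
  assumes ne: "x0 \<noteq> x1" "x0 \<noteq> x2" "x0 \<noteq> x3" "x1 \<noteq> x2" "x1 \<noteq> x3" "x2 \<noteq> x3"
  shows "g0/((x0-x1)*(x0-x2)*(x0-x3)) + g1/((x1-x0)*(x1-x2)*(x1-x3)) + g2/((x2-x0)*(x2-x1)*(x2-x3))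
     + g3/((x3-x0)*(x3-x1)*(x3-x2))
   = (g3 - (g0/((x0-x1)*(x0-x2)) * ((x3-x1)*(x3-x2)) + g1/((x1-x0)*(x1-x2))*((x3-x0)*(x3-x2))
        + g2/((x2-x0)*(x2-x1))*((x3-x0)*(x3-x1)))) / ((x3-x0)*(x3-x1)*(x3-x2))"
proof -
  have ne': "x1 \<noteq> x0" "x2 \<noteq> x0" "x3 \<noteq> x0" "x2 \<noteq> x1" "x3 \<noteq> x1" "x3 \<noteq> x2" using ne by auto
  let ?P = "(x3-x0)*(x3-x1)*(x3-x2)"
  have c0: "g0/((x0-x1)*(x0-x2)*(x0-x3)) = - (g0/((x0-x1)*(x0-x2)) * ((x3-x1)*(x3-x2))) / ?P"
    using ne ne' by (simp add: divide_simps) (simp add: algebra_simps)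
  have c1: "g1/((x1-x0)*(x1-x2)*(x1-x3)) = - (g1/((x1-x0)*(x1-x2))*((x3-x0)*(x3-x2))) / ?P"
    using ne ne' by (simp add: divide_simps) (simp add: algebra_simps)
  have c2: "g2/((x2-x0)*(x2-x1)*(x2-x3)) = - (g2/((x2-x0)*(x2-x1))*((x3-x0)*(x3-x1))) / ?P"
    using ne ne' by (simp add: divide_simps) (simp add: algebra_simps)
  show ?thesis unfolding c0 c1 c2 by (simp add: diff_divide_distrib add_divide_distrib)
qed

definition dd1 :: "(real \<Rightarrow> real) \<Rightarrow> real \<Rightarrow> real \<Rightarrow> real" where
  "dd1 f a b = (f b - f a) / (b - a)"
definition dd2 :: "(real \<Rightarrow> real) \<Rightarrow> real \<Rightarrow> real \<Rightarrow> real \<Rightarrow> real" where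
  "dd2 f a b c = (dd1 f b c - dd1 f a b) / (c - a)"

lemma divdiff3_rec:
  assumes "a < b" "b < c" "c < d"
  shows "divdiff3 f a b c d = (dd2 f b c d - dd2 f a b c) / (d - a)"
proof -
  have ne: "a \<noteq> b" "a \<noteq> c" "a \<noteq> d" "b \<noteq> c" "b \<noteq> d" "c \<noteq> d"
    "b \<noteq> a" "c \<noteq> a" "d \<noteq> a" "c \<noteq> b" "d \<noteq> b" "d \<noteq> c"
    using assms by auto
  show ?thesis unfolding divdiff3_explicit dd2_def dd1_def
    apply (simp add: divide_simps ne)
    by algebra
qed


lemma concave_slopes:
  assumes conc: "concave_on S f" and S: "p \<in> S" "r \<in> S" and pq: "p < q" "q < r"
  shows "dd1 f p r \<le> dd1 f p q" "dd1 f q r \<le> dd1 f p r"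
proof -
  define t where "t = (q - p) / (r - p)"
  have t: "0 \<le> t" "t \<le> 1" using pq by (auto simp: t_def field_simps)
  have tq: "t * (r - p) = q - p" using pq by (simp add: t_def)
  then have q: "q = (1 - t) *\<^sub>R p + t *\<^sub>R r" by (simp add: algebra_simps)
  have ineq: "f q \<ge> (1 - t) * f p + t * f r"
    using concave_onD[OF conc t S] q by simp
  have ne: "q \<noteq> p" "r \<noteq> p" "r \<noteq> q" using pq by auto
  have "f q - f p \<ge> t * (f r - f p)" using ineq by (simp add: algebra_simps)
  then have "(f q - f p) / (q - p) \<ge> t * (f r - f p) / (q - p)" using pq
    by (simp add: divide_right_mono)
  also have "t * (f r - f p) / (q - p) = (f r - f p) / (r - p)" using tq ne
    by (simp add: divide_simps)
  finally show "dd1 f p r \<le> dd1 f p q" unfolding dd1_def .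
  have "f r - f q \<le> (1 - t) * (f r - f p)" using ineq by (simp add: algebra_simps)
  then have "(f r - f q) / (r - q) \<le> (1 - t) * (f r - f p) / (r - q)" using pq
    by (simp add: divide_right_mono)
  also have "(1 - t) * (r - p) = r - q" using tq by (simp add: algebra_simps)
  then have "(1 - t) * (f r - f p) / (r - q) = (f r - f p) / (r - p)" using ne
    by (simp add: divide_simps)
  finally show "dd1 f q r \<le> dd1 f p r" unfolding dd1_def .
qed

lemma deriv_convex_dd3:
  fixes g g' :: "real \<Rightarrow> real"
  assumes x: "x0 < x1" "x1 < x2" "x2 < x3"
    and der: "\<And>x. x \<in> {x0..x3} \<Longrightarrow> (g has_real_derivative g' x) (at x)"
    and cv: "convex_on {x0..x3} g'"
  shows "divdiff3 g x0 x1 x2 x3 \<ge> 0"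
proof -
  have ne: "x0 \<noteq> x1" "x0 \<noteq> x2" "x0 \<noteq> x3" "x1 \<noteq> x2" "x1 \<noteq> x3" "x2 \<noteq> x3"
    "x1 \<noteq> x0" "x2 \<noteq> x0" "x3 \<noteq> x0" "x2 \<noteq> x1" "x3 \<noteq> x1" "x3 \<noteq> x2"
    using x by auto
  define A where "A = g x0 / ((x0-x1)*(x0-x2))"
  define B where "B = g x1 / ((x1-x0)*(x1-x2))"
  define C where "C = g x2 / ((x2-x0)*(x2-x1))"
  define P where "P t = A * ((t-x1)*(t-x2)) + B * ((t-x0)*(t-x2)) + C * ((t-x0)*(t-x1))" for t
  define P' where "P' t = A * (2*t-x1-x2) + B * (2*t-x0-x2) + C * (2*t-x0-x1)" for t
  define e where "e t = g t - P t" for t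
  define e' where "e' t = g' t - P' t" for t
  have dP: "(P has_real_derivative P' t) (at t)" for t
    unfolding P_def P'_def
    by (auto intro!: derivative_eq_intros simp: algebra_simps)
  have de: "(e has_real_derivative e' t) (at t)" if "t \<in> {x0..x3}" for t
    unfolding e_def[abs_def] e'_def using der[OF that] dP by (auto intro!: derivative_eq_intros)
  have e0: "e x0 = 0" "e x1 = 0" "e x2 = 0"
    unfolding e_def P_def A_def B_def C_def using ne by (simp_all add: divide_simps)
  have cont: "continuous_on {a..b} e" if "x0 \<le> a" "b \<le> x3" for a b
    using de that by (intro continuous_at_imp_continuous_on ballI) (meson DERIV_isCont atLeastAtMost_iff order_trans)
  have rolle: "\<exists>z. a < z \<and> z < b \<and> e' z = 0" if "x0 \<le> a" "a < b" "b \<le> x3" "e a = e b" for a b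
  proof -
    have "\<exists>z. a < z \<and> z < b \<and> (*) (e' z) = (\<lambda>v. 0)"
      apply (rule Rolle_deriv[OF that(2) that(4) cont[OF that(1) that(3)]])
      using de that unfolding has_field_derivative_def by auto
    then show ?thesis by (metis mult_cancel_left1 mult.commute mult_zero_left zero_neq_one)
  qed
  obtain z1 where z1: "x0 < z1" "z1 < x1" "e' z1 = 0" using rolle[of x0 x1] x e0 by auto
  obtain z2 where z2: "x1 < z2" "z2 < x2" "e' z2 = 0" using rolle[of x1 x2] x e0 by auto
  have cve: "convex_on {x0..x3} e'"
  proof (rule convex_on_linorderI)
    show "convex {x0..x3}" by simp
    fix t u v :: real assume tuv: "0 < t" "t < 1" "u \<in> {x0..x3}" "v \<in> {x0..x3}" "u < v"
    have "g' ((1 - t) *\<^sub>R u + t *\<^sub>R v) \<le> (1 - t) * g' u + t * g' v"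
      using convex_onD[OF cv, of t u v] tuv by auto
    moreover have "P' ((1 - t) *\<^sub>R u + t *\<^sub>R v) = (1 - t) * P' u + t * P' v"
      unfolding P'_def by (simp add: algebra_simps)
    ultimately show "e' ((1 - t) *\<^sub>R u + t *\<^sub>R v) \<le> (1 - t) * e' u + t * e' v"
      unfolding e'_def by (simp add: algebra_simps)
  qed
  have pos: "e' t \<ge> 0" if "x2 \<le> t" "t \<le> x3" for t
  proof -
    define s where "s = (z2 - z1) / (t - z1)"
    have s: "0 < s" "s \<le> 1" using z1 z2 x that by (auto simp: s_def field_simps)
    have "s * (t - z1) = z2 - z1" using z1 z2 x that by (simp add: s_def)
    then have zz: "z2 = (1 - s) *\<^sub>R z1 + s *\<^sub>R t" by (simp add: algebra_simps)
    have "e' z2 \<le> (1 - s) * e' z1 + s * e' t"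
      using convex_onD[OF cve, of s z1 t] s z1 z2 x that zz by auto
    then have "0 \<le> s * e' t" using z1 z2 by simp
    then show ?thesis using s by (simp add: zero_le_mult_iff)
  qed
  have "e x2 \<le> e x3"
  proof (rule DERIV_nonneg_imp_nondecreasing[of x2 x3 e])
    fix t assume "x2 \<le> t" "t \<le> x3"
    then show "\<exists>y. DERIV e t :> y \<and> y \<ge> 0" using de pos x by (intro exI[of _ "e' t"]) auto
  qed (use x in auto)
  then have e3: "e x3 \<ge> 0" using e0 by simp
  have "divdiff3 g x0 x1 x2 x3 = e x3 / ((x3-x0)*(x3-x1)*(x3-x2))"
    unfolding divdiff3_explicit lagrange_id[OF ne(1-6)] e_def P_def A_def B_def C_def by simp
  then show ?thesis using e3 x by simp
qed


lemma dd1_swap: "dd1 f a b = dd1 f b a"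
  unfolding dd1_def by (metis minus_diff_eq minus_divide_divide)

lemma diff_from_3conv:
  assumes conc: "concave_on {0..} f" and c3: "three_convex_on {0..} f" and x: "0 < x"
  shows "\<exists>D. (f has_real_derivative D) (at x)"
proof -
  let ?S = "{0::real..}"
  have sl1: "dd1 f p r \<le> dd1 f p q" if "0 \<le> p" "p < q" "q < r" for p q r
    using concave_slopes(1)[OF conc, of p r q] that by auto
  have sl2: "dd1 f q r \<le> dd1 f p r" if "0 \<le> p" "p < q" "q < r" for p q r
    using concave_slopes(2)[OF conc, of p r q] that by auto
  have low: "dd1 f x b \<le> dd1 f a x" if "0 \<le> a" "a < x" "x < b" for a b
    using sl1[of a x b] sl2[of a x b] that by linarith
  define K where "K = dd1 f 0 (x/2) - dd1 f x (x+1)"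
  define M where "M = \<bar>K\<bar> + 1"
  have M: "M > 0" by (simp add: M_def)
  have key: "dd1 f a x \<le> dd1 f x b + (b - a) * M / x" if a: "x/2 \<le> a" "a < x" "x < b" for a b
  proof -
    have a0: "0 < a" using a x by linarith
    have "divdiff3 f 0 a x b \<ge> 0" using c3 a0 a unfolding three_convex_on_def by auto
    then have "(dd2 f a x b - dd2 f 0 a x) / (b - 0) \<ge> 0" using divdiff3_rec[of 0 a x b f] a0 a by simp
    moreover have "b > 0" using a x by linarith
    ultimately have i1: "dd2 f 0 a x \<le> dd2 f a x b" by (simp add: zero_le_divide_iff)
    have i2: "dd1 f 0 a \<le> dd1 f 0 (x/2)"
      using sl1[of 0 "x/2" a] a x by (cases "a = x/2") auto
    have i3: "dd1 f x (x+1) \<le> dd1 f a x" using low[of a "x+1"] a0 a by auto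
    have "- K / x \<le> (dd1 f a x - dd1 f 0 a) / x" using i2 i3 x unfolding K_def
      by (intro divide_right_mono) auto
    also have "\<dots> = dd2 f 0 a x" by (simp add: dd2_def)
    also have "\<dots> \<le> (dd1 f x b - dd1 f a x) / (b - a)" using i1 by (simp add: dd2_def)
    finally have "- K / x * (b - a) \<le> dd1 f x b - dd1 f a x" using a
      by (simp add: divide_simps)
    moreover have "- M / x * (b - a) \<le> - K / x * (b - a)" unfolding M_def using a x
      by (intro mult_right_mono divide_right_mono) auto
    ultimately show ?thesis by (simp add: algebra_simps)
  qed
  define T where "T = (\<lambda>b. dd1 f x b) ` {x<..x+1}"
  define L where "L = Sup T"
  have Tne: "T \<noteq> {}" by (auto simp: T_def)
  have Tbdd: "bdd_above T" unfolding T_def bdd_above_def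
    using low[of "x/2"] x by (intro exI[of _ "dd1 f (x/2) x"]) auto
  have right: "((\<lambda>b. dd1 f x b) \<longlongrightarrow> L) (at_right x)"
  proof (rule order_tendstoI)
    fix y assume "y < L"
    then obtain b0 where b0: "b0 \<in> {x<..x+1}" "y < dd1 f x b0"
      using less_cSup_iff[OF Tne Tbdd] unfolding L_def T_def by auto
    show "eventually (\<lambda>b. y < dd1 f x b) (at_right x)"
      unfolding eventually_at_right_field
    proof (intro exI[of _ b0] conjI allI impI)
      show "x < b0" using b0 by auto
      fix b assume "x < b" "b < b0"
      then show "y < dd1 f x b" using sl1[of x b b0] b0 x by auto
    qed
  next
    fix y assume "y > L"
    show "eventually (\<lambda>b. dd1 f x b < y) (at_right x)"
      unfolding eventually_at_right_field
    proof (intro exI[of _ "x+1"] conjI allI impI)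
      fix b assume "x < b" "b < x + 1"
      then have "dd1 f x b \<le> L" unfolding L_def using Tbdd by (intro cSup_upper) (auto simp: T_def)
      then show "dd1 f x b < y" using \<open>y > L\<close> by auto
    qed simp
  qed
  have left: "((\<lambda>a. dd1 f a x) \<longlongrightarrow> L) (at_left x)"
  proof (rule order_tendstoI)
    fix y assume "y < L"
    show "eventually (\<lambda>a. y < dd1 f a x) (at_left x)"
      unfolding eventually_at_left_field
    proof (intro exI[of _ "x/2"] conjI allI impI)
      fix a assume a: "x/2 < a" "a < x"
      have "L \<le> dd1 f a x" unfolding L_def using Tne
        using a x by (intro cSup_least) (auto simp: T_def intro!: low)
      then show "y < dd1 f a x" using \<open>y < L\<close> by auto
    qed (use x in auto)
  next
    fix y assume "y > L"
    define \<delta> where "\<delta> = min (min (x/2) 1) ((y - L) * x / (2 * M))"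
    have \<delta>: "\<delta> > 0" using x M \<open>y > L\<close> by (auto simp: \<delta>_def)
    show "eventually (\<lambda>a. dd1 f a x < y) (at_left x)"
      unfolding eventually_at_left_field
    proof (intro exI[of _ "x - \<delta>"] conjI allI impI)
      fix a assume a: "x - \<delta> < a" "a < x"
      have d1: "\<delta> \<le> x/2" "\<delta> \<le> 1" "\<delta> \<le> (y - L) * x / (2 * M)" by (auto simp: \<delta>_def)
      have dd: "2 * \<delta> \<le> 2 * ((y - L) * x / (2 * M))" using d1 by linarith
      have b: "x < 2*x - a" "2*x - a \<le> x + 1" using a d1 by auto
      have e1: "dd1 f a x \<le> dd1 f x (2*x - a) + (2*x - a - a) * M / x"
        using key[of a "2*x - a"] a d1 b by auto
      have e2: "dd1 f x (2*x - a) \<le> L" unfolding L_def using Tbdd b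
        by (intro cSup_upper) (auto simp: T_def)
      have "(2*x - a - a) * M / x = 2 * (x - a) * M / x" by (simp add: algebra_simps)
      also have "\<dots> < 2 * \<delta> * M / x" using a M x
        by (intro divide_strict_right_mono mult_strict_right_mono) auto
      also have "\<dots> \<le> 2 * ((y - L) * x / (2 * M)) * M / x"
        by (intro divide_right_mono mult_right_mono dd) (use M x in auto)
      also have "\<dots> = y - L" using M x by (simp add: field_simps)
      finally show "dd1 f a x < y" using e1 e2 by linarith
    qed (use \<delta> in auto)
  qed
  have "((\<lambda>y. (f y - f x) / (y - x)) \<longlongrightarrow> L) (at x)"
  proof (subst filterlim_at_split, rule conjI)
    have "(\<lambda>y. (f y - f x) / (y - x)) = (\<lambda>a. dd1 f a x)"
      by (rule ext) (metis dd1_def dd1_swap)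
    then show "((\<lambda>y. (f y - f x) / (y - x)) \<longlongrightarrow> L) (at_left x)" using left by simp
    have "(\<lambda>y. (f y - f x) / (y - x)) = (\<lambda>b. dd1 f x b)"
      by (rule ext) (simp add: dd1_def)
    then show "((\<lambda>y. (f y - f x) / (y - x)) \<longlongrightarrow> L) (at_right x)" using right by simp
  qed
  then show ?thesis using has_field_derivative_iff by blast
qed


lemma slope3_imp_convex:
  fixes h :: "real \<Rightarrow> real"
  assumes conv: "convex S"
    and sl: "\<And>x y z. x \<in> S \<Longrightarrow> z \<in> S \<Longrightarrow> x < y \<Longrightarrow> y < z \<Longrightarrow>
        (h y - h x) / (y - x) \<le> (h z - h y) / (z - y)"
  shows "convex_on S h"
proof (rule convex_on_linorderI[OF _ conv])
  fix t u v :: real assume tuv: "0 < t" "t < 1" "u \<in> S" "v \<in> S" "u < v"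
  define m where "m = (1 - t) *\<^sub>R u + t *\<^sub>R v"
  have m1a: "m - u = t * (v - u)" by (simp add: m_def algebra_simps)
  have m1b: "v - m = (1 - t) * (v - u)" by (simp add: m_def algebra_simps)
  note m1 = m1a m1b
  have p1: "t * (v - u) > 0" "(1 - t) * (v - u) > 0" using tuv by auto
  have "m - u > 0" using m1a p1(1) by simp
  moreover have "v - m > 0" using m1b p1(2) by simp
  ultimately have um: "u < m" "m < v" by simp_all
  have "(h m - h u) / (t * (v - u)) \<le> (h v - h m) / ((1 - t) * (v - u))"
    using sl[OF tuv(3,4) um] m1 by simp
  then have "(h m - h u) * ((1 - t) * (v - u)) \<le> (h v - h m) * (t * (v - u))"
    using tuv by (simp add: divide_simps mult_pos_pos)
  then have "((h m - h u) * (1 - t)) * (v - u) \<le> ((h v - h m) * t) * (v - u)"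
    by (simp add: algebra_simps)
  then have "(h m - h u) * (1 - t) \<le> (h v - h m) * t" using tuv by simp
  then show "h m \<le> (1 - t) * h u + t * h v" by (simp add: algebra_simps)
qed

lemma deriv_convex_from_3conv:
  assumes c3: "three_convex_on {0..} f"
    and der: "\<And>x. x > 0 \<Longrightarrow> (f has_real_derivative f' x) (at x)"
  shows "convex_on {0<..} f'"
proof (rule slope3_imp_convex)
  show "convex {0::real<..}" by simp
  fix x y z :: real assume xyz: "x \<in> {0<..}" "z \<in> {0<..}" "x < y" "y < z"
  have x0: "x > 0" using xyz by simp
  have ne: "x \<noteq> y" "y \<noteq> z" "x \<noteq> z" "y \<noteq> x" "z \<noteq> y" "z \<noteq> x" using xyz by auto
  have fc: "(f \<longlongrightarrow> f p) (at_right p)" if "p > 0" for p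
    using DERIV_isCont[OF der[OF that]] by (simp add: continuous_at filterlim_at_split)
  have fd: "((\<lambda>t. dd1 f p t) \<longlongrightarrow> f' p) (at_right p)" if "p > 0" for p
    using der[OF that] unfolding has_field_derivative_iff dd1_def
    by (rule tendsto_mono[OF at_le, rotated]) simp
  have dd3: "divdiff3 f a b c d \<ge> 0" if "0 < a" "a < b" "b < c" "c < d" for a b c d
    using c3 that unfolding three_convex_on_def by auto
  define dxy where "dxy = dd1 f x y"
  define dyz where "dyz = dd1 f y z"
  define V1 where "V1 = ((dyz - dxy)/(z-x) - (dxy - f' x)/(y-x))/(z-x)"
  define V2 where "V2 = ((dyz - f' y)/(z-y) - (f' y - dxy)/(y-x))/(z-x)"
  define V3 where "V3 = ((f' z - dyz)/(z-y) - (dyz - dxy)/(z-x))/(z-x)"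
  have V1: "V1 \<ge> 0"
  proof (rule tendsto_lowerbound)
    show "((\<lambda>t. (dd2 f t y z - dd2 f x t y)/(z-x)) \<longlongrightarrow> V1) (at_right x)"
      unfolding V1_def dd2_def dxy_def dyz_def
      apply (intro tendsto_intros fd x0)
      unfolding dd1_def using ne by (auto intro!: tendsto_intros fc x0)
    show "eventually (\<lambda>t. 0 \<le> (dd2 f t y z - dd2 f x t y)/(z-x)) (at_right x)"
      unfolding eventually_at_right_field
      using xyz dd3 divdiff3_rec by (intro exI[of _ y]) auto
  qed simp
  have V2: "V2 \<ge> 0"
  proof (rule tendsto_lowerbound)
    show "((\<lambda>t. (dd2 f y t z - dd2 f x y t)/(z-x)) \<longlongrightarrow> V2) (at_right y)"
      unfolding V2_def dd2_def dxy_def dyz_def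
      apply (intro tendsto_intros fd)
      unfolding dd1_def using ne xyz by (auto intro!: tendsto_intros fc)
    show "eventually (\<lambda>t. 0 \<le> (dd2 f y t z - dd2 f x y t)/(z-x)) (at_right y)"
      unfolding eventually_at_right_field
      using xyz dd3 divdiff3_rec by (intro exI[of _ z]) auto
  qed simp
  have V3: "V3 \<ge> 0"
  proof (rule tendsto_lowerbound)
    show "((\<lambda>t. (dd2 f y z t - dd2 f x y z)/(t-x)) \<longlongrightarrow> V3) (at_right z)"
      unfolding V3_def dd2_def dxy_def dyz_def
      apply (intro tendsto_intros fd)
      unfolding dd1_def using ne xyz by (auto intro!: tendsto_intros fc)
    show "eventually (\<lambda>t. 0 \<le> (dd2 f y z t - dd2 f x y z)/(t-x)) (at_right z)"
      unfolding eventually_at_right_field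
      using xyz dd3 divdiff3_rec by (intro exI[of _ "z+1"]) auto
  qed simp
  have "V1 + V2 + V3 = ((f' z - f' y)/(z-y) - (f' y - f' x)/(y-x))/(z-x)"
    unfolding V1_def V2_def V3_def using ne by (simp add: divide_simps) (simp add: algebra_simps)
  then have "((f' z - f' y)/(z-y) - (f' y - f' x)/(y-x))/(z-x) \<ge> 0" using V1 V2 V3 by linarith
  then show "(f' y - f' x) / (y - x) \<le> (f' z - f' y) / (z - y)"
    using xyz by (simp add: zero_le_divide_iff)
qed


lemma powr_concave0:
  assumes a: "0 < a" "a \<le> 1"
  shows "concave_on {0..} (\<lambda>t::real. t powr a)"
proof -
  have cpos: "convex_on {0<..} (\<lambda>t::real. - (t powr a))"
  proof (rule convex_on_realI[where f' = "\<lambda>t. - (a * t powr (a - 1))"])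
    show "connected {0::real<..}" by simp
    fix x :: real assume "x \<in> {0<..}"
    then show "((\<lambda>t. - (t powr a)) has_real_derivative - (a * x powr (a - 1))) (at x)"
      by (auto intro!: derivative_eq_intros has_real_derivative_powr)
  next
    fix x y :: real assume "x \<in> {0<..}" "y \<in> {0<..}" "x \<le> y"
    then have "y powr (a - 1) \<le> x powr (a - 1)" using a by (intro powr_mono2') auto
    then show "- (a * x powr (a - 1)) \<le> - (a * y powr (a - 1))" using a by simp
  qed
  show ?thesis
  proof (rule concave_on_linorderI)
    show "convex {0::real..}" by simp
    fix t x y :: real assume txy: "0 < t" "t < 1" "x \<in> {0..}" "y \<in> {0..}" "x < y"
    show "((1 - t) * x powr a + t * y powr a) \<le> ((1 - t) *\<^sub>R x + t *\<^sub>R y) powr a"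
    proof (cases "x = 0")
      case True
      have "t powr 1 \<le> t powr a" using txy a by (intro powr_mono') auto
      then have "t * y powr a \<le> t powr a * y powr a" using txy by (intro mult_right_mono) auto
      also have "\<dots> = (t * y) powr a" using txy by (simp add: powr_mult)
      finally show ?thesis using True a by simp
    next
      case False
      then have "x > 0" "y > 0" using txy by auto
      then show ?thesis using convex_onD[OF cpos, of t x y] txy by simp
    qed
  qed
qed

lemma powr_convex_neg:
  assumes a: "a \<le> 0"
  shows "convex_on {0<..} (\<lambda>t::real. t powr a)"
proof (rule convex_on_realI[where f' = "\<lambda>t. a * t powr (a - 1)"])
  show "connected {0::real<..}" by simp
  fix x :: real assume "x \<in> {0<..}"
  then show "((\<lambda>t. t powr a) has_real_derivative a * x powr (a - 1)) (at x)"
    by (auto intro!: has_real_derivative_powr)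
next
  fix x y :: real assume "x \<in> {0<..}" "y \<in> {0<..}" "x \<le> y"
  then have "y powr (a - 1) \<le> x powr (a - 1)" using a by (intro powr_mono2') auto
  then show "a * x powr (a - 1) \<le> a * y powr (a - 1)" using a by (intro mult_left_mono_neg) auto
qed

lemma convex_prod_antimono:
  fixes u v :: "real \<Rightarrow> real"
  assumes S: "convex S"
    and cu: "convex_on S u" and cv: "convex_on S v"
    and nu: "\<And>x. x \<in> S \<Longrightarrow> u x \<ge> 0" and nv: "\<And>x. x \<in> S \<Longrightarrow> v x \<ge> 0"
    and mu: "\<And>x y. x \<in> S \<Longrightarrow> y \<in> S \<Longrightarrow> x \<le> y \<Longrightarrow> u y \<le> u x"
    and mv: "\<And>x y. x \<in> S \<Longrightarrow> y \<in> S \<Longrightarrow> x \<le> y \<Longrightarrow> v y \<le> v x"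
  shows "convex_on S (\<lambda>x. u x * v x)"
proof (rule convex_on_linorderI[OF _ S])
  fix t x y :: real assume txy: "0 < t" "t < 1" "x \<in> S" "y \<in> S" "x < y"
  define m where "m = (1 - t) *\<^sub>R x + t *\<^sub>R y"
  have mS: "m \<in> S" unfolding m_def using S txy by (intro convexD) auto
  have U: "u m \<le> (1 - t) * u x + t * u y" using convex_onD[OF cu, of t x y] txy by (simp add: m_def)
  have V: "v m \<le> (1 - t) * v x + t * v y" using convex_onD[OF cv, of t x y] txy by (simp add: m_def)
  have "u m * v m \<le> ((1 - t) * u x + t * u y) * ((1 - t) * v x + t * v y)"
    using U V nu[OF mS] nv[OF mS] by (intro mult_mono) (auto intro: order_trans)
  also have "\<dots> = (1 - t) * (u x * v x) + t * (u y * v y) - t * (1 - t) * ((u x - u y) * (v x - v y))"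
    by (simp add: algebra_simps)
  also have "\<dots> \<le> (1 - t) * (u x * v x) + t * (u y * v y)"
  proof -
    have "(u x - u y) * (v x - v y) \<ge> 0" using mu[OF txy(3,4)] mv[OF txy(3,4)] txy by auto
    moreover have "t * (1 - t) \<ge> 0" using txy by auto
    ultimately show ?thesis by (simp add: mult_nonneg_nonneg)
  qed
  finally show "u ((1 - t) *\<^sub>R x + t *\<^sub>R y) * v ((1 - t) *\<^sub>R x + t *\<^sub>R y)
      \<le> (1 - t) * (u x * v x) + t * (u y * v y)" by (simp add: m_def)
qed



theorem corollary1:
  fixes f :: "real \<Rightarrow> real" and \<alpha> :: real
  assumes nonneg: "\<forall>x\<ge>0. f x \<ge> 0"
    and cont: "continuous_on {0..} f"
    and conv3: "three_convex_on {0..} f"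
    and mono: "mono_on {0..} f"
    and conc: "concave_on {0..} f"
    and alpha: "0 < \<alpha>" "\<alpha> \<le> 1"
  shows "continuous_on {0..} (\<lambda>x. f x powr \<alpha>)
       \<and> three_convex_on {0..} (\<lambda>x. f x powr \<alpha>)
       \<and> mono_on {0..} (\<lambda>x. f x powr \<alpha>)
       \<and> concave_on {0..} (\<lambda>x. f x powr \<alpha>)"
proof -
  define g where "g x = f x powr \<alpha>" for x
  have gcont: "continuous_on {0..} g"
    unfolding g_def using nonneg alpha
    by (intro continuous_on_powr' cont continuous_on_const) auto
  have gmono: "mono_on {0..} g"
  proof (rule mono_onI)
    fix r s :: real assume rs: "r \<in> {0..}" "s \<in> {0..}" "r \<le> s"
    then show "g r \<le> g s" unfolding g_def using nonneg alpha mono_onD[OF mono rs]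
      by (intro powr_mono2) auto
  qed
  have gconc: "concave_on {0..} g"
  proof (rule concave_on_linorderI)
    show "convex {0::real..}" by simp
    fix t x y :: real assume txy: "0 < t" "t < 1" "x \<in> {0..}" "y \<in> {0..}" "x < y"
    define m where "m = (1 - t) *\<^sub>R x + t *\<^sub>R y"
    have fm: "f m \<ge> (1 - t) * f x + t * f y"
      using concave_onD[OF conc, of t x y] txy by (simp add: m_def)
    have c0: "(1 - t) * f x + t * f y \<ge> 0" using nonneg txy by auto
    have "(1 - t) * g x + t * g y \<le> ((1 - t) *\<^sub>R f x + t *\<^sub>R f y) powr \<alpha>"
      using concave_onD[OF powr_concave0[OF alpha], of t "f x" "f y"] nonneg txy
      by (simp add: g_def)
    also have "\<dots> \<le> g m" unfolding g_def using fm c0 alpha by (intro powr_mono2) auto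
    finally show "(1 - t) * g x + t * g y \<le> g ((1 - t) *\<^sub>R x + t *\<^sub>R y)" by (simp add: m_def)
  qed
  have g3: "three_convex_on {0..} g"
  proof (cases "\<exists>x>0. f x = 0")
    case True
    then obtain z where z: "z > 0" "f z = 0" by auto
    have f0: "f y = 0" if "y \<ge> 0" for y
    proof (cases "y \<le> z")
      case True
      then show ?thesis using mono_onD[OF mono, of y z] that z nonneg by force
    next
      case False
      define t where "t = z / y"
      have t: "0 < t" "t < 1" using False z by (auto simp: t_def)
      have "(1 - t) * f 0 + t * f y \<le> f ((1 - t) *\<^sub>R 0 + t *\<^sub>R y)"
        using concave_onD[OF conc, of t 0 y] t that by auto
      also have "(1 - t) *\<^sub>R 0 + t *\<^sub>R y = z" using False z by (simp add: t_def)
      finally have "t * f y \<le> 0" using z nonneg t by (smt (verit) mult_nonneg_nonneg)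
      then have "f y \<le> 0" using t by (simp add: mult_le_0_iff)
      then show ?thesis using nonneg that by (simp add: order_antisym)
    qed
    show ?thesis unfolding three_convex_on_def
    proof (intro allI impI)
      fix x0 x1 x2 x3 :: real
      assume "x0 \<in> {0..} \<and> x1 \<in> {0..} \<and> x2 \<in> {0..} \<and> x3 \<in> {0..} \<and> x0 < x1 \<and> x1 < x2 \<and> x2 < x3"
      then show "divdiff3 g x0 x1 x2 x3 \<ge> 0"
        unfolding divdiff3_explicit g_def using f0 alpha by simp
    qed
  next
    case False
    have fpos: "f x > 0" if "x > 0" for x
    proof -
      have "f x \<noteq> 0" using False that by auto
      moreover have "f x \<ge> 0" using nonneg that by auto
      ultimately show ?thesis by simp
    qed
    define f' where "f' = deriv f"
    have der: "(f has_real_derivative f' x) (at x)" if xpos: "x > 0" for x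
    proof -
      obtain D where D: "(f has_real_derivative D) (at x)" using diff_from_3conv[OF conc conv3 xpos] by blast
      have "deriv f x = D" by (rule DERIV_imp_deriv[OF D])
      then show ?thesis using D by (simp add: f'_def)
    qed
    have cf': "convex_on {0<..} f'" by (rule deriv_convex_from_3conv[OF conv3 der])
    have concp: "convex_on {0<..} (\<lambda>x. - f x)"
      using conc unfolding concave_on_def by (rule convex_on_subset) auto
    have tang: "f y - f x \<le> f' x * (y - x)" if "x > 0" "y > 0" for x y
    proof -
      have "(- f y) - (- f x) \<ge> (- f' x) * (y - x)"
      proof (rule convex_on_imp_above_tangent[OF concp])
        show "connected {0::real<..}" by simp
        show "x \<in> interior {0<..}" using that by (simp add: interior_open)
        show "y \<in> {0<..}" using that by simp
        show "((\<lambda>x. - f x) has_real_derivative - f' x) (at x within {0<..})"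
          by (rule has_field_derivative_at_within[OF DERIV_minus[OF der[OF that(1)]]])
      qed
      then show ?thesis by (simp add: algebra_simps)
    qed
    have f'anti: "f' y \<le> f' x" if "0 < x" "x \<le> y" for x y
    proof -
      have "f y - f x \<le> f' x * (y - x)" using tang that by auto
      moreover have "f x - f y \<le> f' y * (x - y)" using tang that by auto
      ultimately have "f' y * (y - x) \<le> f' x * (y - x)" by (simp add: algebra_simps)
      show ?thesis
      proof (cases "x = y")
        case False
        then have "y - x > 0" using that by simp
        then show ?thesis using \<open>f' y * (y - x) \<le> f' x * (y - x)\<close> by simp
      qed simp
    qed
    have f'nn: "f' x \<ge> 0" if "x > 0" for x
    proof (rule tendsto_lowerbound)
      show "((\<lambda>t. (f t - f x) / (t - x)) \<longlongrightarrow> f' x) (at_right x)"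
        using der[OF that] unfolding has_field_derivative_iff
        by (rule tendsto_mono[OF at_le, rotated]) simp
      show "\<forall>\<^sub>F t in at_right x. 0 \<le> (f t - f x) / (t - x)"
        unfolding eventually_at_right_field using that
      proof (intro exI[of _ "x+1"] conjI allI impI)
        fix t
        assume "x < t" "t < x + 1"
        have "f x \<le> f t" using mono_onD[OF mono, of x t] that \<open>x < t\<close> by simp
        then show "0 \<le> (f t - f x) / (t - x)" using \<open>x < t\<close> by simp
      qed simp
    qed simp
    define h where "h x = \<alpha> * f x powr (\<alpha> - 1)" for x
    have hnn: "h x \<ge> 0" for x using alpha by (simp add: h_def)
    have hanti: "h y \<le> h x" if "0 < x" "x \<le> y" for x y
    proof -
      have "f x > 0" using fpos that by simp
      moreover have "f x \<le> f y" using mono_onD[OF mono, of x y] that by simp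
      ultimately have "f y powr (\<alpha> - 1) \<le> f x powr (\<alpha> - 1)" using alpha by (intro powr_mono2') simp_all
      then show ?thesis unfolding h_def using alpha by simp
    qed
    have hconv: "convex_on {0<..} h"
    proof (rule convex_on_linorderI)
      show "convex {0::real<..}" by simp
      fix t x y :: real assume txy: "0 < t" "t < 1" "x \<in> {0<..}" "y \<in> {0<..}" "x < y"
      define m where "m = (1 - t) *\<^sub>R x + t *\<^sub>R y"
      define c where "c = (1 - t) * f x + t * f y"
      have fm: "c \<le> f m"
        using concave_onD[OF conc, of t x y] txy by (simp add: m_def c_def)
      have "f x > 0" "f y > 0" using fpos txy by simp_all
      then have "(1 - t) * f x > 0" "t * f y > 0" using txy by simp_all
      then have c0: "c > 0" unfolding c_def by simp
      have "f m powr (\<alpha> - 1) \<le> c powr (\<alpha> - 1)" using fm c0 alpha by (intro powr_mono2') auto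
      also have "\<dots> \<le> (1 - t) * f x powr (\<alpha> - 1) + t * f y powr (\<alpha> - 1)"
        using convex_onD[OF powr_convex_neg[of "\<alpha> - 1"], of t "f x" "f y"] alpha txy fpos
        by (simp add: c_def)
      finally have "\<alpha> * f m powr (\<alpha> - 1) \<le> \<alpha> * ((1 - t) * f x powr (\<alpha> - 1) + t * f y powr (\<alpha> - 1))"
        using alpha by (intro mult_left_mono) auto
      then show "h ((1 - t) *\<^sub>R x + t *\<^sub>R y) \<le> (1 - t) * h x + t * h y"
        by (simp add: h_def m_def algebra_simps)
    qed
    define g' where "g' x = h x * f' x" for x
    have g'conv: "convex_on {0<..} g'"
      unfolding g'_def
    proof (rule convex_prod_antimono[OF _ hconv cf'])
      show "convex {0::real<..}" by simp
      show "h x \<ge> 0" for x by (rule hnn)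
      show "f' x \<ge> 0" if "x \<in> {0<..}" for x using that f'nn by simp
      show "h y \<le> h x" if "x \<in> {0<..}" "y \<in> {0<..}" "x \<le> y" for x y
        using that hanti by simp
      show "f' y \<le> f' x" if "x \<in> {0<..}" "y \<in> {0<..}" "x \<le> y" for x y
        using that f'anti by simp
    qed
    have gder: "(g has_real_derivative g' x) (at x)" if "x > 0" for x
      using DERIV_fun_powr[OF der[OF that] fpos[OF that], of \<alpha>]
      by (simp add: g_def[abs_def] g'_def h_def)
    have pos3: "divdiff3 g x0 x1 x2 x3 \<ge> 0" if "0 < x0" "x0 < x1" "x1 < x2" "x2 < x3" for x0 x1 x2 x3
    proof (rule deriv_convex_dd3[OF that(2-4), of g g'])
      show "(g has_real_derivative g' x) (at x)" if "x \<in> {x0..x3}" for x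
        using that \<open>0 < x0\<close> by (intro gder) simp
      show "convex_on {x0..x3} g'"
        by (rule convex_on_subset[OF g'conv]) (use \<open>0 < x0\<close> in auto)
    qed
    show ?thesis unfolding three_convex_on_def
    proof (intro allI impI)
      fix x0 x1 x2 x3 :: real
      assume xs: "x0 \<in> {0..} \<and> x1 \<in> {0..} \<and> x2 \<in> {0..} \<and> x3 \<in> {0..} \<and> x0 < x1 \<and> x1 < x2 \<and> x2 < x3"
      show "divdiff3 g x0 x1 x2 x3 \<ge> 0"
      proof (cases "x0 = 0")
        case False
        then show ?thesis using xs pos3 by auto
      next
        case True
        have g0: "(g \<longlongrightarrow> g 0) (at_right 0)"
          using gcont unfolding continuous_on_def
          by (intro tendsto_mono[OF at_le[of "{0<..}" "{0..}"]]) auto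
        show ?thesis
        proof (rule tendsto_lowerbound)
          show "((\<lambda>t. divdiff3 g t x1 x2 x3) \<longlongrightarrow> divdiff3 g x0 x1 x2 x3) (at_right 0)"
          proof -
            have ne: "x1 \<noteq> 0" "x2 \<noteq> 0" "x3 \<noteq> 0" "x1 \<noteq> x2" "x1 \<noteq> x3" "x2 \<noteq> x3" using xs True by auto
            have "((\<lambda>t. g t / ((t - x1) * (t - x2) * (t - x3)) + g x1 / ((x1 - t) * (x1 - x2) * (x1 - x3)) +
                g x2 / ((x2 - t) * (x2 - x1) * (x2 - x3)) + g x3 / ((x3 - t) * (x3 - x1) * (x3 - x2)))
              \<longlongrightarrow> g 0 / ((0 - x1) * (0 - x2) * (0 - x3)) + g x1 / ((x1 - 0) * (x1 - x2) * (x1 - x3)) +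
                g x2 / ((x2 - 0) * (x2 - x1) * (x2 - x3)) + g x3 / ((x3 - 0) * (x3 - x1) * (x3 - x2))) (at_right 0)"
              by (intro tendsto_add tendsto_divide tendsto_mult tendsto_diff tendsto_const tendsto_ident_at g0)
                (use ne in simp_all)
            then show ?thesis unfolding divdiff3_explicit True .
          qed
          show "\<forall>\<^sub>F t in at_right 0. 0 \<le> divdiff3 g t x1 x2 x3"
            unfolding eventually_at_right_field using xs pos3
            by (intro exI[of _ x1]) auto
        qed simp
      qed
    qed
  qed
  show ?thesis using gcont g3 gmono gconc unfolding g_def[abs_def] by auto
qed
end
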